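(* Let $n \geq 18$ be divisible by $3$, and let $A_n$ be the set of binary words of length $n$ that contain no $3$-antipower as a factor. Then $$A_n = \mathcal{C}_n\left(0^* \cup (01)^* \cup (01)^* 0 \cup 0^*10^* \cup 0^*011 \cup 0^*101\right).$$
   Context: Words are over $\{0,1\}$. A $3$-antipower is a word $u_1u_2u_3$ with $|u_1|=|u_2|=|u_3|$ and $u_1,u_2,u_3$ pairwise distinct; a factor is a contiguous subword. For a word $w$, $w^* = \{\varepsilon, w, w^2, \dots\}$, and sets of words are written as regular expressions (concatenation of sets, union). For a language $L \subseteq \{0,1\}^*$, $\mathcal{C}_n(L)$ denotes the closure of $L \cap \{0,1\}^n$ under bitwise complementation (exchanging $0$ and $1$) and reversal; i.e., it consists of all length-$n$ words of $L$, their bitwise complements, their reversals, and the bitwise complements of their reversals. *)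

theory Defs
  imports Main "HOL-Library.Sublist"
begin

(* Binary words: bool list, with False = letter 0 and True = letter 1. *)
type_synonym word = "bool list"

abbreviation b0 :: bool where "b0 \<equiv> False"
abbreviation b1 :: bool where "b1 \<equiv> True"

definition three_antipower :: "word \<Rightarrow> bool" where
  "three_antipower w \<longleftrightarrow> (\<exists>u1 u2 u3. w = u1 @ u2 @ u3 \<and>
      length u1 = length u2 \<and> length u2 = length u3 \<and>
      u1 \<noteq> u2 \<and> u1 \<noteq> u3 \<and> u2 \<noteq> u3)"

definition star_of :: "word \<Rightarrow> word set" where
  "star_of w = {concat (replicate k w) | k. True}"

definition lconc :: "word set \<Rightarrow> word set \<Rightarrow> word set" (infixr "\<cdot>" 65) where
  "A \<cdot> B = {u @ v | u v. u \<in> A \<and> v \<in> B}"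

definition complement :: "word \<Rightarrow> word" where
  "complement w = map Not w"

definition closure_n :: "nat \<Rightarrow> word set \<Rightarrow> word set" where
  "closure_n n L = (let Ln = {w \<in> L. length w = n} in
      Ln \<union> complement ` Ln \<union> rev ` Ln \<union> (complement \<circ> rev) ` Ln)"

definition A :: "nat \<Rightarrow> word set" where
  "A n = {w. length w = n \<and> \<not> (\<exists>f. sublist f w \<and> three_antipower f)}"

definition L4 :: "word set" where
  "L4 = star_of [b0] \<union> star_of [b0,b1] \<union> (star_of [b0,b1] \<cdot> {[b0]})
      \<union> (star_of [b0] \<cdot> {[b1]} \<cdot> star_of [b0])
      \<union> (star_of [b0] \<cdot> {[b0,b1,b1]}) \<union> (star_of [b0] \<cdot> {[b1,b0,b1]})"

end

theory Submission
  imports Defs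
begin

definition antiat :: "word \<Rightarrow> nat \<Rightarrow> nat \<Rightarrow> bool" where
  "antiat w s k \<longleftrightarrow> s + 3*k \<le> length w \<and>
     (\<exists>i<k. w!(s+i) \<noteq> w!(s+k+i)) \<and> (\<exists>i<k. w!(s+i) \<noteq> w!(s+2*k+i)) \<and>
     (\<exists>i<k. w!(s+k+i) \<noteq> w!(s+2*k+i))"

definition af :: "word \<Rightarrow> bool" where
  "af w \<longleftrightarrow> \<not> (\<exists>s k. antiat w s k)"

lemma antiat_transfer:
  assumes h: "\<And>j. j < 3*k \<Longrightarrow> w!(s+j) = f!(t+j)" and a: "antiat f t k" and le: "s + 3*k \<le> length w"
  shows "antiat w s k"
proof -
  have e1: "w!(s+i) = f!(t+i)" if "i<k" for i using h[of i] that by simp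
  have e2: "w!(s+k+i) = f!(t+k+i)" if "i<k" for i using h[of "k+i"] that by (simp add: add.assoc)
  have e3: "w!(s+2*k+i) = f!(t+2*k+i)" if "i<k" for i using h[of "2*k+i"] that by (simp add: add.assoc)
  from a obtain i1 i2 i3 where "i1<k" "f!(t+i1) \<noteq> f!(t+k+i1)" "i2<k" "f!(t+i2) \<noteq> f!(t+2*k+i2)"
     "i3<k" "f!(t+k+i3) \<noteq> f!(t+2*k+i3)" unfolding antiat_def by blast
  then show ?thesis unfolding antiat_def using le e1 e2 e3 by metis
qed

lemma ta_iff: "three_antipower f \<longleftrightarrow> (\<exists>k. length f = 3*k \<and> antiat f 0 k)"
proof
  assume "three_antipower f"
  then obtain u1 u2 u3 where f: "f = u1 @ u2 @ u3" and l: "length u1 = length u2" "length u2 = length u3"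
    and d: "u1 \<noteq> u2" "u1 \<noteq> u3" "u2 \<noteq> u3"
    unfolding three_antipower_def by blast
  define k where "k = length u1"
  have n1: "f!(0+i) = u1!i" if "i<k" for i using that l by (simp add: f k_def nth_append)
  have n2: "f!(0+k+i) = u2!i" if "i<k" for i using that l by (simp add: f k_def nth_append)
  have n3: "f!(0+2*k+i) = u3!i" if "i<k" for i using that l by (simp add: f k_def nth_append)
  obtain i1 where j1: "i1<k" "u1!i1 \<noteq> u2!i1" using d(1) l unfolding k_def list_eq_iff_nth_eq by auto
  obtain i2 where j2: "i2<k" "u1!i2 \<noteq> u3!i2" using d(2) l unfolding k_def list_eq_iff_nth_eq by auto
  obtain i3 where j3: "i3<k" "u2!i3 \<noteq> u3!i3" using d(3) l unfolding k_def list_eq_iff_nth_eq by auto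
  have lf: "length f = 3*k" using l f k_def by simp
  have c1: "\<exists>i<k. f!(0+i) \<noteq> f!(0+k+i)" using j1 n1[of i1] n2[of i1] by auto
  have c2: "\<exists>i<k. f!(0+i) \<noteq> f!(0+2*k+i)" using j2 n1[of i2] n3[of i2] by auto
  have c3: "\<exists>i<k. f!(0+k+i) \<noteq> f!(0+2*k+i)" using j3 n2[of i3] n3[of i3] by auto
  have "antiat f 0 k" unfolding antiat_def using c1 c2 c3 lf by simp
  then show "\<exists>k. length f = 3*k \<and> antiat f 0 k" using lf by blast
next
  assume "\<exists>k. length f = 3*k \<and> antiat f 0 k"
  then obtain k where lf: "length f = 3*k" and a: "antiat f 0 k" by blast
  define u1 where "u1 = take k f"
  define u2 where "u2 = take k (drop k f)"
  define u3 where "u3 = drop (2*k) f"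
  have dd: "drop (2*k) f = drop k (drop k f)" by (simp add: mult_2)
  have f: "f = u1 @ u2 @ u3" unfolding u1_def u2_def u3_def dd by (simp only: append_take_drop_id)
  have l: "length u1 = k" "length u2 = k" "length u3 = k" using lf by (auto simp: u1_def u2_def u3_def)
  have n1: "u1!i = f!(0+i)" if "i<k" for i using that by (simp add: u1_def)
  have n2: "u2!i = f!(0+k+i)" if "i<k" for i using that lf by (simp add: u2_def)
  have n3: "u3!i = f!(0+2*k+i)" if "i<k" for i using that lf by (simp add: u3_def)
  from a obtain i1 i2 i3 where "i1<k" "f!(0+i1) \<noteq> f!(0+k+i1)" "i2<k" "f!(0+i2) \<noteq> f!(0+2*k+i2)"
     "i3<k" "f!(0+k+i3) \<noteq> f!(0+2*k+i3)" unfolding antiat_def by blast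
  then have dd: "u1 \<noteq> u2" "u1 \<noteq> u3" "u2 \<noteq> u3" using n1 n2 n3 by metis+
  show "three_antipower f" unfolding three_antipower_def
    by (rule exI[of _ u1], rule exI[of _ u2], rule exI[of _ u3]) (simp add: f l dd)
qed

lemma af_iff: "(\<exists>f. sublist f w \<and> three_antipower f) \<longleftrightarrow> (\<exists>s k. antiat w s k)"
proof
  assume "\<exists>f. sublist f w \<and> three_antipower f"
  then obtain f k ps ss where w: "w = ps @ f @ ss" and lf: "length f = 3*k" and a: "antiat f 0 k"
    unfolding ta_iff sublist_def by blast
  have "antiat w (length ps) k"
    by (rule antiat_transfer[OF _ a]) (auto simp: w nth_append lf)
  then show "\<exists>s k. antiat w s k" by blast
next
  assume "\<exists>s k. antiat w s k"
  then obtain s k where a: "antiat w s k" by blast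
  define f where "f = take (3*k) (drop s w)"
  have le: "s + 3*k \<le> length w" using a antiat_def by auto
  have lf: "length f = 3*k" using le by (simp add: f_def)
  have "antiat f 0 k"
    by (rule antiat_transfer[OF _ a]) (use le in \<open>auto simp: f_def lf\<close>)
  then have "three_antipower f" using lf ta_iff by blast
  moreover have "sublist f w" unfolding f_def
    by (meson sublist_drop sublist_take sublist_order.order.trans)
  ultimately show "\<exists>f. sublist f w \<and> three_antipower f" by blast
qed

lemma A_eq: "A n = {w. length w = n \<and> af w}"
  unfolding A_def af_def af_iff by simp

definition word_of :: "nat \<Rightarrow> (nat \<Rightarrow> bool) \<Rightarrow> word" where
  "word_of m P = map P [0..<m]"

lemma length_word_of[simp]: "length (word_of m P) = m" by (simp add: word_of_def)
lemma nth_word_of[simp]: "i < m \<Longrightarrow> word_of m P ! i = P i" by (simp add: word_of_def)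

lemma word_of_cong: "(\<And>i. i < m \<Longrightarrow> P i = Q i) \<Longrightarrow> word_of m P = word_of m Q"
  by (simp add: word_of_def)

definition ext :: "nat \<Rightarrow> (nat \<Rightarrow> bool) \<Rightarrow> bool \<Rightarrow> nat \<Rightarrow> bool" where
  "ext m P c = (\<lambda>i. if i < m then P i else c)"

lemma ext_app[simp]: "ext m P c i = (if i < m then P i else c)" by (simp add: ext_def)

lemma word_of_snoc: "word_of m P @ [c] = word_of (Suc m) (ext m P c)"
  by (simp add: word_of_def)

lemma noaf:
  assumes "af (word_of N P)" "s+3*k \<le> N" "i1<k" "P(s+i1) \<noteq> P(s+k+i1)" "i2<k" "P(s+i2) \<noteq> P(s+2*k+i2)"
    "i3<k" "P(s+k+i3) \<noteq> P(s+2*k+i3)"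
  shows False
proof -
  have c1: "\<exists>i<k. word_of N P!(s+i) \<noteq> word_of N P!(s+k+i)"
    by (rule exI[of _ i1]) (use assms(2-) in simp)
  have c2: "\<exists>i<k. word_of N P!(s+i) \<noteq> word_of N P!(s+2*k+i)"
    by (rule exI[of _ i2]) (use assms(2-) in simp)
  have c3: "\<exists>i<k. word_of N P!(s+k+i) \<noteq> word_of N P!(s+2*k+i)"
    by (rule exI[of _ i3]) (use assms(2-) in simp)
  have "antiat (word_of N P) s k" unfolding antiat_def using assms(2) c1 c2 c3 by simp
  then show False using assms(1) af_def by blast
qed

definition fam :: "nat \<Rightarrow> (nat \<Rightarrow> bool) \<Rightarrow> bool" where
  "fam m P \<longleftrightarrow> P = (\<lambda>i. False) \<or> P = odd \<or> P = (\<lambda>i. m-2 \<le> i) \<or> P = (\<lambda>i. i < 2)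
     \<or> P = (\<lambda>i. i = m-3 \<or> i = m-1) \<or> P = (\<lambda>i. i = 0 \<or> i = 2) \<or> (\<exists>a<m. P = (\<lambda>i. i = a))
     \<or> (m mod 3 \<noteq> 0 \<and> P = (\<lambda>i. i = 0 \<or> i = m-1))
     \<or> (m mod 3 = 2 \<and> (P = (\<lambda>i. i = 1 \<or> i = m-1) \<or> P = (\<lambda>i. i = 0 \<or> i = m-2)
          \<or> P = (\<lambda>i. i = 0 \<or> m-2 \<le> i) \<or> P = (\<lambda>i. i \<le> 1 \<or> i = m-1)))"

abbreviation good where "good m P c \<equiv> (\<exists>Q. fam (Suc m) Q \<and> (\<forall>i<Suc m. ext m P c i = Q i))"

lemma goodI: "fam (Suc m) Q \<Longrightarrow> (\<And>i. i < Suc m \<Longrightarrow> ext m P c i = Q i) \<Longrightarrow> good m P c"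
  by blast

lemma step_Z: assumes "12 \<le> m" shows "good m (\<lambda>i. False) c"
proof (cases c)
  case True show ?thesis by (rule goodI[of _ "\<lambda>i. i = m"]) (auto simp: fam_def True)
next
  case False show ?thesis by (rule goodI[of _ "\<lambda>i. False"]) (auto simp: fam_def False)
qed

lemma mod3E: obtains (z) k where "(x::nat) = 3*k" | (o) k where "x = 3*k+1" | (t) k where "x = 3*k+2"
proof -
  have "\<exists>k. x = 3*k \<or> x = 3*k+1 \<or> x = 3*k+2" by presburger
  then show ?thesis using that by blast
qed

lemma famZ: "fam m (\<lambda>i. False)" unfolding fam_def by blast
lemma famAlt: "fam m odd" unfolding fam_def by blast
lemma famT1: "fam m (\<lambda>i. m-2 \<le> i)" unfolding fam_def by blast
lemma famT2: "fam m (\<lambda>i. i < 2)" unfolding fam_def by blast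
lemma famU1: "fam m (\<lambda>i. i = m-3 \<or> i = m-1)" unfolding fam_def by blast
lemma famU2: "fam m (\<lambda>i. i = 0 \<or> i = 2)" unfolding fam_def by blast
lemma famS: "a < m \<Longrightarrow> fam m (\<lambda>i. i = a)" unfolding fam_def by blast
lemma famEa: "m mod 3 \<noteq> 0 \<Longrightarrow> fam m (\<lambda>i. i = 0 \<or> i = m-1)" unfolding fam_def by blast
lemma famEb: "m mod 3 = 2 \<Longrightarrow> fam m (\<lambda>i. i = 1 \<or> i = m-1)" unfolding fam_def by blast
lemma famEc: "m mod 3 = 2 \<Longrightarrow> fam m (\<lambda>i. i = 0 \<or> i = m-2)" unfolding fam_def by blast
lemma famEd: "m mod 3 = 2 \<Longrightarrow> fam m (\<lambda>i. i = 0 \<or> m-2 \<le> i)" unfolding fam_def by blast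
lemma famEe: "m mod 3 = 2 \<Longrightarrow> fam m (\<lambda>i. i \<le> 1 \<or> i = m-1)" unfolding fam_def by blast

lemma step_Alt: assumes "12 \<le> m" "af (word_of (Suc m) (ext m odd c))" shows "good m odd c"
proof (cases "c = odd m")
  case True show ?thesis by (rule goodI[OF famAlt]) (auto simp: True less_Suc_eq)
next
  case False
  show ?thesis
    apply (rule noaf[OF assms(2), of "m-8" 3 0 2 0, THEN FalseE]) using assms(1) False by (simp_all, ((presburger | arith)+)?)
qed

lemma step_S: assumes "12 \<le> m" "a < m" "af (word_of (Suc m) (ext m (\<lambda>i. i = a) c))"
  shows "good m (\<lambda>i. i = a) c"
proof (cases c)
  case False show ?thesis by (rule goodI[OF famS[of a "Suc m"]]) (use assms(2) in \<open>auto simp: False\<close>)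
next
  case c: True
  have "a = m-1 \<or> a = m-2 \<or> a = m-3 \<or> a = m-4 \<or> a = m-6 \<or> a = 0 \<or> a = 1
    \<or> (2 \<le> a \<and> a + 5 \<le> m \<and> a \<noteq> m-4 \<and> a \<noteq> m-6)" using assms(1,2) by presburger
  then consider "a = m-1" | "a = m-2" | "a = m-3" | "a = m-4" | "a = m-6" | "a = 0" | "a = 1"
    | "2 \<le> a" "a + 5 \<le> m" "a \<noteq> m-4" "a \<noteq> m-6" by blast
  then show ?thesis
  proof cases
    case 1 show ?thesis by (rule goodI[OF famT1[of "Suc m"]]) (use 1 assms(1) in \<open>auto simp: c, (presburger+)?\<close>)
  next
    case 2 show ?thesis by (rule goodI[OF famU1[of "Suc m"]]) (use 2 assms(1) in \<open>auto simp: c, (presburger+)?\<close>)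
  next
    case 3 show ?thesis apply (rule noaf[OF assms(3), of "m-5" 2 0 1 0, THEN FalseE]) using 3 assms(1) c by (simp_all, ((presburger | arith)+)?)
  next
    case 4 show ?thesis apply (rule noaf[OF assms(3), of "m-8" 3 1 2 1, THEN FalseE]) using 4 assms(1) c by (simp_all, ((presburger | arith)+)?)
  next
    case 5 show ?thesis apply (rule noaf[OF assms(3), of "m-11" 4 1 3 1, THEN FalseE]) using 5 assms(1) c by (simp_all, ((presburger | arith)+)?)
  next
    case 6 show ?thesis
    proof (cases "Suc m mod 3 = 0")
      case False show ?thesis by (rule goodI[OF famEa[of "Suc m"]]) (use 6 False assms(1) in \<open>auto simp: c, (presburger+)?\<close>)
    next
      case True then obtain k where k: "Suc m = 3*k" by auto
      show ?thesis apply (rule noaf[OF assms(3), of 0 k 0 0 "k-1", THEN FalseE]) using 6 k assms(1) c by (simp_all, ((presburger | arith)+)?)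
    qed
  next
    case 7 show ?thesis
    proof (cases "Suc m" rule: mod3E)
      case (t k) show ?thesis by (rule goodI[OF famEb[of "Suc m"]]) (use 7 t assms(1) in \<open>auto simp: c, (presburger+)?\<close>)
    next
      case (z k) show ?thesis apply (rule noaf[OF assms(3), of 0 k 1 1 "k-1", THEN FalseE]) using 7 z assms(1) c by (simp_all, ((presburger | arith)+)?)
    next
      case (o k) show ?thesis apply (rule noaf[OF assms(3), of 1 k 0 0 "k-1", THEN FalseE]) using 7 o assms(1) c by (simp_all, ((presburger | arith)+)?)
    qed
  next
    case 8
    define b where "b = m - 1 - a"
    have b: "m = a + b + 1" "4 \<le> b" "b \<noteq> 5" using 8 unfolding b_def by arith+
    obtain a' where a': "a = a' + 2" using 8 by (metis le_add_diff_inverse2)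
    show ?thesis
    proof (cases b rule: mod3E)
      case (o j) show ?thesis apply (rule noaf[OF assms(3), of "a'+2" "j+1" 0 0 j, THEN FalseE]) using b o c a' by (simp_all, ((presburger | arith)+)?)
    next
      case (z j) show ?thesis apply (rule noaf[OF assms(3), of "a'+1" "j+1" 1 1 j, THEN FalseE]) using b z c a' by (simp_all, ((presburger | arith)+)?)
    next
      case (t j) show ?thesis apply (rule noaf[OF assms(3), of "a'" "j+2" 2 2 "j+1", THEN FalseE]) using b t c a' by (simp_all, ((presburger | arith)+)?)
    qed
  qed
qed

lemma step_T1: assumes "12 \<le> m" "af (word_of (Suc m) (ext m (\<lambda>i. m-2 \<le> i) c))"
  shows "good m (\<lambda>i. m-2 \<le> i) c"
  apply (rule noaf[OF assms(2), of "m-5" 2 1 0 0, THEN FalseE]) using assms(1) by (simp_all, ((presburger | arith)+)?)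

lemma step_T2: assumes "12 \<le> m" "af (word_of (Suc m) (ext m (\<lambda>i. i < 2) c))"
  shows "good m (\<lambda>i. i < 2) c"
proof (cases c)
  case False show ?thesis by (rule goodI[OF famT2]) (use assms(1) in \<open>auto simp: False\<close>)
next
  case c: True
  show ?thesis
  proof (cases "Suc m" rule: mod3E)
    case (t k) show ?thesis by (rule goodI[OF famEe[of "Suc m"]]) (use t assms(1) in \<open>auto simp: c, (presburger+)?\<close>)
  next
    case (z k) show ?thesis apply (rule noaf[OF assms(2), of 0 k 0 0 "k-1", THEN FalseE]) using z assms(1) c by (simp_all, ((presburger | arith)+)?)
  next
    case (o k) show ?thesis apply (rule noaf[OF assms(2), of 1 k 0 0 "k-1", THEN FalseE]) using o assms(1) c by (simp_all, ((presburger | arith)+)?)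
  qed
qed

lemma step_U1: assumes "12 \<le> m" "af (word_of (Suc m) (ext m (\<lambda>i. i = m-3 \<or> i = m-1) c))"
  shows "good m (\<lambda>i. i = m-3 \<or> i = m-1) c"
proof (cases c)
  case False show ?thesis apply (rule noaf[OF assms(2), of "m-8" 3 2 1 1, THEN FalseE]) using assms(1) False by (simp_all, ((presburger | arith)+)?)
next
  case True show ?thesis apply (rule noaf[OF assms(2), of "m-5" 2 0 0 1, THEN FalseE]) using assms(1) True by (simp_all, ((presburger | arith)+)?)
qed

lemma step_U2: assumes "12 \<le> m" "af (word_of (Suc m) (ext m (\<lambda>i. i = 0 \<or> i = 2) c))"
  shows "good m (\<lambda>i. i = 0 \<or> i = 2) c"
proof (cases c)
  case False show ?thesis by (rule goodI[OF famU2]) (use assms(1) in \<open>auto simp: False\<close>)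
next
  case c: True
  show ?thesis
  proof (cases "Suc m" rule: mod3E)
    case (z k) show ?thesis apply (rule noaf[OF assms(2), of 0 k 0 0 "k-1", THEN FalseE]) using z assms(1) c by (simp_all, ((presburger | arith)+)?)
  next
    case (o k) show ?thesis apply (rule noaf[OF assms(2), of 1 k 1 1 "k-1", THEN FalseE]) using o assms(1) c by (simp_all, ((presburger | arith)+)?)
  next
    case (t k) show ?thesis apply (rule noaf[OF assms(2), of 2 k 0 0 "k-1", THEN FalseE]) using t assms(1) c by (simp_all, ((presburger | arith)+)?)
  qed
qed

lemma step_Ea: assumes "12 \<le> m" "af (word_of (Suc m) (ext m (\<lambda>i. i = 0 \<or> i = m-1) c))" "m mod 3 \<noteq> 0"
  shows "good m (\<lambda>i. i = 0 \<or> i = m-1) c"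
proof (cases "Suc m" rule: mod3E)
  case (z k) show ?thesis apply (rule noaf[OF assms(2), of 0 k 0 0 "k-2", THEN FalseE]) using z assms(1) by (simp_all, ((presburger | arith)+)?)
next
  case (o k) then have False using assms(3) by presburger then show ?thesis ..
next
  case (t k)
  show ?thesis
  proof (cases c)
    case False show ?thesis by (rule goodI[OF famEc[of "Suc m"]]) (use t assms(1) in \<open>auto simp: False, (presburger+)?\<close>)
  next
    case True show ?thesis by (rule goodI[OF famEd[of "Suc m"]]) (use t assms(1) in \<open>auto simp: True, (presburger+)?\<close>)
  qed
qed

lemma step_Eb: assumes "12 \<le> m" "af (word_of (Suc m) (ext m (\<lambda>i. i = 1 \<or> i = m-1) c))" "m mod 3 = 2"
  shows "good m (\<lambda>i. i = 1 \<or> i = m-1) c"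
proof -
  have "Suc m mod 3 = 0" using assms(3) by presburger
  then obtain k where z: "Suc m = 3*k" by auto
  show ?thesis apply (rule noaf[OF assms(2), of 0 k 1 1 "k-2", THEN FalseE]) using z assms(1) by (simp_all, ((presburger | arith)+)?)
qed

lemma step_Ec: assumes "12 \<le> m" "af (word_of (Suc m) (ext m (\<lambda>i. i = 0 \<or> i = m-2) c))" "m mod 3 = 2"
  shows "good m (\<lambda>i. i = 0 \<or> i = m-2) c"
proof -
  have "Suc m mod 3 = 0" using assms(3) by presburger
  then obtain k where z: "Suc m = 3*k" by auto
  show ?thesis apply (rule noaf[OF assms(2), of 0 k 0 0 "k-3", THEN FalseE]) using z assms(1) by (simp_all, ((presburger | arith)+)?)
qed

lemma step_Ed: assumes "12 \<le> m" "af (word_of (Suc m) (ext m (\<lambda>i. i = 0 \<or> m-2 \<le> i) c))" "m mod 3 = 2"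
  shows "good m (\<lambda>i. i = 0 \<or> m-2 \<le> i) c"
proof -
  have "Suc m mod 3 = 0" using assms(3) by presburger
  then obtain k where z: "Suc m = 3*k" by auto
  show ?thesis apply (rule noaf[OF assms(2), of 0 k 0 0 "k-3", THEN FalseE]) using z assms(1) by (simp_all, ((presburger | arith)+)?)
qed

lemma step_Ee: assumes "12 \<le> m" "af (word_of (Suc m) (ext m (\<lambda>i. i \<le> 1 \<or> i = m-1) c))" "m mod 3 = 2"
  shows "good m (\<lambda>i. i \<le> 1 \<or> i = m-1) c"
proof -
  have "Suc m mod 3 = 0" using assms(3) by presburger
  then obtain k where z: "Suc m = 3*k" by auto
  show ?thesis apply (rule noaf[OF assms(2), of 0 k 0 0 "k-2", THEN FalseE]) using z assms(1) by (simp_all, ((presburger | arith)+)?)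
qed

lemma step_fam: assumes "12 \<le> m" "fam m P" "af (word_of (Suc m) (ext m P c))"
  shows "good m P c"
  using assms(2)[unfolded fam_def]
proof (elim disjE exE conjE)
  assume e: "P = (\<lambda>i. False)" show ?thesis unfolding e by (rule step_Z[OF assms(1)])
next
  assume e: "P = odd" show ?thesis unfolding e by (rule step_Alt[OF assms(1)]) (use assms(3)[unfolded e] in simp)
next
  assume e: "P = (\<lambda>i. m-2 \<le> i)" show ?thesis unfolding e by (rule step_T1[OF assms(1)]) (use assms(3)[unfolded e] in simp)
next
  assume e: "P = (\<lambda>i. i < 2)" show ?thesis unfolding e by (rule step_T2[OF assms(1)]) (use assms(3)[unfolded e] in simp)
next
  assume e: "P = (\<lambda>i. i = m-3 \<or> i = m-1)" show ?thesis unfolding e by (rule step_U1[OF assms(1)]) (use assms(3)[unfolded e] in simp)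
next
  assume e: "P = (\<lambda>i. i = 0 \<or> i = 2)" show ?thesis unfolding e by (rule step_U2[OF assms(1)]) (use assms(3)[unfolded e] in simp)
next
  fix a assume a: "a < m" and e: "P = (\<lambda>i. i = a)" show ?thesis unfolding e by (rule step_S[OF assms(1) a]) (use assms(3)[unfolded e] in simp)
next
  assume h: "m mod 3 \<noteq> 0" and e: "P = (\<lambda>i. i = 0 \<or> i = m-1)" show ?thesis unfolding e by (rule step_Ea[OF assms(1) _ h]) (use assms(3)[unfolded e] in simp)
next
  assume h: "m mod 3 = 2" and e: "P = (\<lambda>i. i = 1 \<or> i = m-1)" show ?thesis unfolding e by (rule step_Eb[OF assms(1) _ h]) (use assms(3)[unfolded e] in simp)
next
  assume h: "m mod 3 = 2" and e: "P = (\<lambda>i. i = 0 \<or> i = m-2)" show ?thesis unfolding e by (rule step_Ec[OF assms(1) _ h]) (use assms(3)[unfolded e] in simp)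
next
  assume h: "m mod 3 = 2" and e: "P = (\<lambda>i. i = 0 \<or> m-2 \<le> i)" show ?thesis unfolding e by (rule step_Ed[OF assms(1) _ h]) (use assms(3)[unfolded e] in simp)
next
  assume h: "m mod 3 = 2" and e: "P = (\<lambda>i. i \<le> 1 \<or> i = m-1)" show ?thesis unfolding e by (rule step_Ee[OF assms(1) _ h]) (use assms(3)[unfolded e] in simp)
qed

lemma antiat_snoc: "antiat x s k \<Longrightarrow> antiat (x @ [c]) s k"
  by (rule antiat_transfer[where f=x and t=s]) (auto simp: antiat_def nth_append)

lemma af_snoc: "af (x @ [c]) \<Longrightarrow> af x"
  using antiat_snoc af_def by blast

lemma antiat_not: "antiat w s k \<Longrightarrow> antiat (map Not w) s k"
proof -
  assume a: "antiat w s k"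
  then have le: "s + 3*k \<le> length w" by (simp add: antiat_def)
  show "antiat (map Not w) s k"
  proof -
    from a obtain i1 i2 i3 where "i1<k" "w!(s+i1) \<noteq> w!(s+k+i1)" "i2<k" "w!(s+i2) \<noteq> w!(s+2*k+i2)"
     "i3<k" "w!(s+k+i3) \<noteq> w!(s+2*k+i3)" unfolding antiat_def by blast
    then show ?thesis unfolding antiat_def using le
      by (intro conjI exI[of _ i1] exI[of _ i2] exI[of _ i3]) auto
  qed
qed

lemma map_not_not[simp]: "map Not (map Not w) = w" by (induct w) auto

lemma af_not: "af (map Not w) \<longleftrightarrow> af w"
  unfolding af_def by (metis antiat_not map_not_not)

lemma antiat_rev: assumes a: "antiat (rev w) s k" shows "antiat w (length w - s - 3*k) k"
proof -
  define L where "L = length w"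
  define t where "t = L - s - 3*k"
  have le: "s + 3*k \<le> L" using a by (simp add: antiat_def L_def)
  have r: "rev w ! j = w ! (L - Suc j)" if "j < L" for j using that by (simp add: rev_nth L_def)
  from a obtain i1 i2 i3 where h: "i1<k" "rev w!(s+i1) \<noteq> rev w!(s+k+i1)" "i2<k" "rev w!(s+i2) \<noteq> rev w!(s+2*k+i2)"
     "i3<k" "rev w!(s+k+i3) \<noteq> rev w!(s+2*k+i3)" unfolding antiat_def by blast
  have x1: "L - Suc (s+i1) = t+2*k+(k-1-i1)" "L - Suc (s+k+i1) = t+k+(k-1-i1)" using le h(1) unfolding t_def by arith+
  have x2: "L - Suc (s+i2) = t+2*k+(k-1-i2)" "L - Suc (s+2*k+i2) = t+(k-1-i2)" using le h(3) unfolding t_def by arith+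
  have x3: "L - Suc (s+k+i3) = t+k+(k-1-i3)" "L - Suc (s+2*k+i3) = t+(k-1-i3)" using le h(5) unfolding t_def by arith+
  have l1: "s+i1 < L" "s+k+i1 < L" "s+i2 < L" "s+2*k+i2 < L" "s+k+i3 < L" "s+2*k+i3 < L"
    using le h(1,3,5) by arith+
  have c1: "w!(t+k+(k-1-i1)) \<noteq> w!(t+2*k+(k-1-i1))" using h(2) r[OF l1(1)] r[OF l1(2)] x1 by metis
  have c2: "w!(t+(k-1-i2)) \<noteq> w!(t+2*k+(k-1-i2))" using h(4) r[OF l1(3)] r[OF l1(4)] x2 by metis
  have c3: "w!(t+(k-1-i3)) \<noteq> w!(t+k+(k-1-i3))" using h(6) r[OF l1(5)] r[OF l1(6)] x3 by metis
  have "antiat w t k" unfolding antiat_def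
  proof (intro conjI)
    show "t + 3*k \<le> length w" using le unfolding t_def L_def by arith
    show "\<exists>i<k. w ! (t + i) \<noteq> w ! (t + k + i)" using c3 h(5) by (intro exI[of _ "k-1-i3"]) auto
    show "\<exists>i<k. w ! (t + i) \<noteq> w ! (t + 2*k + i)" using c2 h(3) by (intro exI[of _ "k-1-i2"]) auto
    show "\<exists>i<k. w ! (t + k + i) \<noteq> w ! (t + 2*k + i)" using c1 h(1) by (intro exI[of _ "k-1-i1"]) auto
  qed
  then show ?thesis unfolding t_def L_def .
qed

lemma af_rev: "af (rev w) \<longleftrightarrow> af w"
  unfolding af_def by (metis antiat_rev rev_rev_ident)

definition Gc :: "nat \<Rightarrow> word set" where
  "Gc m = {w. \<exists>P. fam m P \<and> (w = word_of m P \<or> w = map Not (word_of m P))}"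

definition antiat_ex :: "word \<Rightarrow> nat \<Rightarrow> nat \<Rightarrow> bool" where
  "antiat_ex w s k \<longleftrightarrow> s + 3*k \<le> length w \<and>
     list_ex (\<lambda>i. w!(s+i) \<noteq> w!(s+k+i)) [0..<k] \<and> list_ex (\<lambda>i. w!(s+i) \<noteq> w!(s+2*k+i)) [0..<k] \<and>
     list_ex (\<lambda>i. w!(s+k+i) \<noteq> w!(s+2*k+i)) [0..<k]"

lemma antiat_ex_eq: "antiat_ex w s k = antiat w s k"
  unfolding antiat_ex_def antiat_def list_ex_iff by auto

definition sufap :: "word \<Rightarrow> bool" where
  "sufap w = list_ex (\<lambda>k. antiat_ex w (length w - 3*k) k) [1..<length w div 3 + 1]"

fun enum :: "nat \<Rightarrow> word list" where
  "enum 0 = [[]]"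
| "enum (Suc m) = filter (\<lambda>w. \<not> sufap w) (concat (map (\<lambda>x. [x@[False], x@[True]]) (enum m)))"

lemma antiat_k: "antiat w s k \<Longrightarrow> 0 < k" unfolding antiat_def by auto

lemma af_Nil: "af []"
  unfolding af_def antiat_def by auto

lemma af_snoc_iff: "af (x @ [c]) \<longleftrightarrow> af x \<and> \<not> sufap (x @ [c])"
proof
  assume a: "af (x @ [c])"
  have "\<not> sufap (x @ [c])"
  proof
    assume "sufap (x @ [c])"
    then obtain k where "antiat_ex (x@[c]) (length (x@[c]) - 3*k) k"
      unfolding sufap_def list_ex_iff by blast
    then show False using a antiat_ex_eq af_def by metis
  qed
  then show "af x \<and> \<not> sufap (x @ [c])" using af_snoc a by blast
next
  assume h: "af x \<and> \<not> sufap (x @ [c])"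
  show "af (x @ [c])" unfolding af_def
  proof
    assume "\<exists>s k. antiat (x @ [c]) s k"
    then obtain s k where a: "antiat (x @ [c]) s k" by blast
    have le: "s + 3*k \<le> length x + 1" using a antiat_def by auto
    have k0: "0 < k" using antiat_k[OF a] .
    show False
    proof (cases "s + 3*k \<le> length x")
      case True
      have "antiat x s k"
        by (rule antiat_transfer[OF _ a True]) (use True in \<open>simp add: nth_append\<close>)
      then show False using h af_def by blast
    next
      case False
      then have s: "s = length (x@[c]) - 3*k" using le by simp
      have "k \<in> set [1..<length (x@[c]) div 3 + 1]" using le False k0 by auto
      then have "sufap (x@[c])" unfolding sufap_def list_ex_iff using a s antiat_ex_eq by metis
      then show False using h by blast
    qed
  qed
qed

lemma enum_set: "set (enum m) = {w. length w = m \<and> af w}"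
proof (induction m)
  case 0 show ?case using af_Nil by auto
next
  case (Suc m)
  show ?case
  proof (intro set_eqI iffI)
    fix w assume "w \<in> set (enum (Suc m))"
    then obtain x c where x: "x \<in> set (enum m)" and w: "w = x @ [c]" and ns: "\<not> sufap w"
      by auto
    then show "w \<in> {w. length w = Suc m \<and> af w}" using Suc af_snoc_iff by auto
  next
    fix w assume "w \<in> {w. length w = Suc m \<and> af w}"
    then have l: "length w = Suc m" and a: "af w" by auto
    then have "w \<noteq> []" by auto
    then have w: "w = butlast w @ [last w]" by simp
    have "af (butlast w)" "\<not> sufap w" using af_snoc_iff a w by metis+
    then have "butlast w \<in> set (enum m)" using Suc l by simp
    then show "w \<in> set (enum (Suc m))" using \<open>\<not> sufap w\<close> w
      by (cases "last w") (auto intro!: bexI[of _ "butlast w"])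
  qed
qed

definition gc_list :: "nat \<Rightarrow> word list" where
  "gc_list m = concat (map (\<lambda>P. [word_of m P, map Not (word_of m P)])
     ([\<lambda>i. False, odd, \<lambda>i. m-2 \<le> i, \<lambda>i. i < 2, \<lambda>i. i = m-3 \<or> i = m-1, \<lambda>i. i = 0 \<or> i = 2]
      @ map (\<lambda>a i. i = a) [0..<m]))"

lemma gc_sub: "set (gc_list m) \<subseteq> Gc m"
  unfolding gc_list_def Gc_def
  using famZ famAlt famT1 famT2 famU1 famU2 famS by fastforce

lemma check12: "list_all (\<lambda>w. List.member (gc_list 12) w) (enum 12)"
  by code_simp

lemma base12: "length w = 12 \<Longrightarrow> af w \<Longrightarrow> w \<in> Gc 12"
proof -
  assume "length w = 12" "af w"
  then have "w \<in> set (enum 12)" using enum_set by blast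
  then have "w \<in> set (gc_list 12)" using check12 by (simp add: list_all_iff)
  then show ?thesis using gc_sub by blast
qed

lemma main_sub: assumes "12 \<le> m" shows "length w = m \<Longrightarrow> af w \<Longrightarrow> w \<in> Gc m"
  using assms
proof (induction m arbitrary: w rule: dec_induct)
  case base then show ?case using base12 by blast
next
  case (step m w)
  have "w \<noteq> []" using step.prems by auto
  then have w: "w = butlast w @ [last w]" by simp
  define x where "x = butlast w"
  define c where "c = last w"
  have wx: "w = x @ [c]" using w x_def c_def by simp
  have lx: "length x = m" using step.prems(1) x_def by simp
  have "af x" using af_snoc step.prems(2) wx by metis
  then obtain P where P: "fam m P" "x = word_of m P \<or> x = map Not (word_of m P)"
    using step.IH[OF lx] unfolding Gc_def by blast
  from P(2) show ?case
  proof
    assume xe: "x = word_of m P"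
    have "af (word_of (Suc m) (ext m P c))" using step.prems(2) wx xe word_of_snoc by metis
    then obtain Q where "fam (Suc m) Q" "\<forall>i<Suc m. ext m P c i = Q i"
      using step_fam[OF step.hyps(1) P(1)] by blast
    then have "w = word_of (Suc m) Q" using wx xe word_of_snoc[of m P c] word_of_cong[of "Suc m" "ext m P c" Q] by simp
    then show ?thesis unfolding Gc_def using \<open>fam (Suc m) Q\<close> by blast
  next
    assume xe: "x = map Not (word_of m P)"
    have wn: "w = map Not (word_of m P @ [\<not> c])" using wx xe by simp
    have "af (word_of (Suc m) (ext m P (\<not> c)))" using step.prems(2) wn word_of_snoc af_not by metis
    then obtain Q where "fam (Suc m) Q" "\<forall>i<Suc m. ext m P (\<not>c) i = Q i"
      using step_fam[OF step.hyps(1) P(1)] by blast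
    then have "w = map Not (word_of (Suc m) Q)" using wn word_of_snoc[of m P "\<not>c"] word_of_cong[of "Suc m" "ext m P (\<not>c)" Q] by simp
    then show ?thesis unfolding Gc_def using \<open>fam (Suc m) Q\<close> by blast
  qed
qed

lemma concat_rep1: "concat (replicate a [x]) = replicate a x"
  by (induct a) auto

lemma word_rep: "replicate k False = word_of k (\<lambda>i. False)"
  by (rule nth_equalityI) auto

lemma rep_snoc: "replicate (Suc j) x = replicate j x @ [x]"
  by (simp add: replicate_append_same)

lemma alt_nth: "i < 2*j \<Longrightarrow> concat (replicate j [False,True]) ! i = odd i"
proof (induction j arbitrary: i)
  case 0 then show ?case by simp
next
  case (Suc j)
  have l: "length (concat (replicate j [False,True])) = 2*j" by (induct j) auto
  have eq: "concat (replicate (Suc j) [False,True]) = concat (replicate j [False,True]) @ [False,True]"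
    by (simp only: rep_snoc concat_append) simp
  show ?case
  proof (cases "i < 2*j")
    case True then show ?thesis using Suc.IH[OF True] l by (simp only: eq nth_append) simp
  next
    case False
    then have "i = 2*j \<or> i = 2*j+1" using Suc.prems by arith
    then show ?thesis using l by (auto simp only: eq nth_append) auto
  qed
qed

lemma alt_len: "length (concat (replicate j [False,True])) = 2*j" by (induct j) auto

lemma word_alt_even: "concat (replicate j [False,True]) = word_of (2*j) odd"
  by (rule nth_equalityI) (auto simp: alt_len alt_nth)

lemma word_alt_odd: "concat (replicate j [False,True]) @ [False] = word_of (2*j+1) odd"
proof (rule nth_equalityI)
  show "length (concat (replicate j [False,True]) @ [False]) = length (word_of (2*j+1) odd)" by (simp add: alt_len)
  fix i assume "i < length (concat (replicate j [False,True]) @ [False])"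
  then have "i < 2*j \<or> i = 2*j" by (simp add: alt_len) arith
  then show "(concat (replicate j [False,True]) @ [False]) ! i = word_of (2*j+1) odd ! i"
    by (auto simp: alt_len alt_nth nth_append)
qed

lemma word_S: "replicate a False @ [True] @ replicate b False = word_of (a+1+b) (\<lambda>i. i = a)"
  by (rule nth_equalityI) (auto simp: nth_append nth_Cons')

lemma word_T1: "replicate a False @ [False,True,True] = word_of (a+3) (\<lambda>i. a+1 \<le> i)"
  by (rule nth_equalityI) (auto simp: nth_append nth_Cons')

lemma word_U1: "replicate a False @ [True,False,True] = word_of (a+3) (\<lambda>i. i = a \<or> i = a+2)"
  by (rule nth_equalityI) (auto simp: nth_append nth_Cons')

lemma rev_T1: "rev (word_of (a+3) (\<lambda>i. a+1 \<le> i)) = word_of (a+3) (\<lambda>i. i < 2)"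
  by (rule nth_equalityI) (auto simp: rev_nth)

lemma rev_U1: "rev (word_of (a+3) (\<lambda>i. i = a \<or> i = a+2)) = word_of (a+3) (\<lambda>i. i = 0 \<or> i = 2)"
  by (rule nth_equalityI) (auto simp: rev_nth)

lemma af_word: "af (word_of N P) \<longleftrightarrow> \<not> (\<exists>s k. s + 3*k \<le> N \<and> (\<exists>i<k. P (s+i) \<noteq> P (s+k+i))
   \<and> (\<exists>i<k. P (s+i) \<noteq> P (s+2*k+i)) \<and> (\<exists>i<k. P (s+k+i) \<noteq> P (s+2*k+i)))"
proof -
  have "antiat (word_of N P) s k \<longleftrightarrow> s + 3*k \<le> N \<and> (\<exists>i<k. P (s+i) \<noteq> P (s+k+i))
   \<and> (\<exists>i<k. P (s+i) \<noteq> P (s+2*k+i)) \<and> (\<exists>i<k. P (s+k+i) \<noteq> P (s+2*k+i))" for s k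
  proof (cases "s + 3*k \<le> N")
    case True
    have e: "word_of N P ! (s + j) = P (s+j)" if "j < 3*k" for j using that True by simp
    have e1: "word_of N P ! (s + i) = P (s+i)" "word_of N P ! (s + k + i) = P (s+k+i)"
      "word_of N P ! (s + 2*k + i) = P (s+2*k+i)" if "i < k" for i using that True by simp_all
    show ?thesis unfolding antiat_def using True e1 by (simp cong: conj_cong)
  next
    case False then show ?thesis unfolding antiat_def by simp
  qed
  then show ?thesis unfolding af_def by blast
qed

lemma afZ: "af (word_of N (\<lambda>i. False))" unfolding af_word by simp
lemma afS: "af (word_of N (\<lambda>i. i = a))" unfolding af_word by auto
lemma afAlt: "af (word_of N odd)" unfolding af_word by auto
lemma afT1: "af (word_of (a+3) (\<lambda>i. a+1 \<le> i))" unfolding af_word by auto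
lemma afU1: "af (word_of (a+3) (\<lambda>i. i = a \<or> i = a+2))" unfolding af_word by auto

lemma lconcI: "u \<in> X \<Longrightarrow> v \<in> Y \<Longrightarrow> u @ v \<in> X \<cdot> Y"
  unfolding lconc_def by blast

lemma star_rep: "replicate k x \<in> star_of [x]"
  unfolding star_of_def by (auto simp: concat_rep1)

lemma star_alt: "concat (replicate k [b0,b1]) \<in> star_of [b0,b1]"
  unfolding star_of_def by auto

lemma inL4_Z: "replicate k False \<in> L4" unfolding L4_def using star_rep by blast
lemma inL4_even: "concat (replicate j [False,True]) \<in> L4" unfolding L4_def using star_alt by blast
lemma inL4_odd: "concat (replicate j [False,True]) @ [False] \<in> L4"
  unfolding L4_def using lconcI[OF star_alt, of "[b0]" "{[b0]}"] by blast
lemma inL4_S: "replicate a False @ [True] @ replicate b False \<in> L4"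
  unfolding L4_def using lconcI[OF star_rep lconcI[OF _ star_rep], of "[b1]" "{[b1]}"] by blast
lemma inL4_T1: "replicate a False @ [False,True,True] \<in> L4"
  unfolding L4_def using lconcI[OF star_rep, of "[b0,b1,b1]" "{[b0,b1,b1]}"] by blast
lemma inL4_U1: "replicate a False @ [True,False,True] \<in> L4"
  unfolding L4_def using lconcI[OF star_rep, of "[b1,b0,b1]" "{[b1,b0,b1]}"] by blast

lemma L4_af: assumes "v \<in> L4" shows "af v"
proof -
  from assms consider (z) k where "v = concat (replicate k [b0])" | (e) k where "v = concat (replicate k [b0,b1])"
    | (o) k where "v = concat (replicate k [b0,b1]) @ [b0]"
    | (s) a b where "v = concat (replicate a [b0]) @ [b1] @ concat (replicate b [b0])"
    | (t) a where "v = concat (replicate a [b0]) @ [b0,b1,b1]"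
    | (u) a where "v = concat (replicate a [b0]) @ [b1,b0,b1]"
    unfolding L4_def lconc_def star_of_def by blast
  then show ?thesis
  proof cases
    case z then show ?thesis using afZ by (simp add: concat_rep1 word_rep)
  next
    case e then show ?thesis using afAlt by (simp only: word_alt_even)
  next
    case o then show ?thesis using afAlt by (simp only: word_alt_odd)
  next
    case s then show ?thesis using afS by (simp only: concat_rep1 word_S)
  next
    case t then show ?thesis using afT1 by (simp only: concat_rep1 word_T1)
  next
    case u then show ?thesis using afU1 by (simp only: concat_rep1 word_U1)
  qed
qed

lemma fam_in: assumes "fam n P" "n mod 3 = 0" "12 \<le> n"
  shows "word_of n P \<in> L4 \<or> word_of n P \<in> rev ` {w \<in> L4. length w = n}"
proof -
  define a where "a = n - 3"
  have a: "n = a + 3" using assms(3) a_def by simp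
  have T1: "word_of n (\<lambda>i. n-2 \<le> i) = replicate a False @ [False,True,True]"
    unfolding word_T1 a by (rule word_of_cong) simp
  have U1: "word_of n (\<lambda>i. i = n-3 \<or> i = n-1) = replicate a False @ [True,False,True]"
    unfolding word_U1 a by (rule word_of_cong) simp
  from assms(1)[unfolded fam_def] show ?thesis
  proof (elim disjE exE conjE)
    assume "P = (\<lambda>i. False)" then show ?thesis using inL4_Z[of n] word_rep by simp
  next
    assume P: "P = odd"
    show ?thesis
    proof (cases "even n")
      case True then obtain j where "n = 2*j" by blast
      then show ?thesis using inL4_even[of j] word_alt_even P by simp
    next
      case False then obtain j where "n = 2*j+1" using oddE by blast
      then show ?thesis using inL4_odd[of j] word_alt_odd P by simp
    qed
  next
    assume "P = (\<lambda>i. n-2 \<le> i)" then show ?thesis using T1 inL4_T1 by simp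
  next
    assume P: "P = (\<lambda>i. i < 2)"
    have h: "word_of n P = rev (replicate a False @ [False,True,True])"
      using P a rev_T1[of a] word_T1[of a] by simp
    have "replicate a False @ [False,True,True] \<in> {w \<in> L4. length w = n}" using inL4_T1[of a] a by simp
    then show ?thesis using h by blast
  next
    assume "P = (\<lambda>i. i = n-3 \<or> i = n-1)" then show ?thesis using U1 inL4_U1 by simp
  next
    assume P: "P = (\<lambda>i. i = 0 \<or> i = 2)"
    have h: "word_of n P = rev (replicate a False @ [True,False,True])"
      using P a rev_U1[of a] word_U1[of a] by simp
    have "replicate a False @ [True,False,True] \<in> {w \<in> L4. length w = n}" using inL4_U1[of a] a by simp
    then show ?thesis using h by blast
  next
    fix b assume b: "b < n" and P: "P = (\<lambda>i. i = b)"
    have "word_of n P = replicate b False @ [True] @ replicate (n-1-b) False"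
      using word_S[of b "n-1-b"] b P by simp
    then show ?thesis using inL4_S by simp
  qed (use assms(2) in simp_all)
qed

theorem theorem4:
  fixes n :: nat
  assumes "n \<ge> 18" and "3 dvd n"
  shows "A n = closure_n n L4"
proof -
  have n12: "12 \<le> n" using assms(1) by simp
  have nm: "n mod 3 = 0" using assms(2) by simp
  define Ln where "Ln = {w \<in> L4. length w = n}"
  have cl: "closure_n n L4 = Ln \<union> complement ` Ln \<union> rev ` Ln \<union> (complement \<circ> rev) ` Ln"
    unfolding closure_n_def Ln_def Let_def by simp
  have cm: "complement = map Not" by (rule ext) (simp add: complement_def)
  show ?thesis
  proof
    show "A n \<subseteq> closure_n n L4"
    proof
      fix w assume "w \<in> A n"
      then have "length w = n" "af w" using A_eq by auto
      then have "w \<in> Gc n" using main_sub n12 by blast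
      then obtain P where P: "fam n P" "w = word_of n P \<or> w = map Not (word_of n P)" unfolding Gc_def by blast
      have "word_of n P \<in> Ln \<or> word_of n P \<in> rev ` Ln" using fam_in[OF P(1) nm n12] unfolding Ln_def by simp
      then show "w \<in> closure_n n L4" unfolding cl cm using P(2) by auto
    qed
  next
    show "closure_n n L4 \<subseteq> A n"
    proof
      fix w assume "w \<in> closure_n n L4"
      then obtain v where v: "v \<in> L4" "length v = n" and
        w: "w = v \<or> w = map Not v \<or> w = rev v \<or> w = map Not (rev v)" unfolding cl cm Ln_def by auto
      have "af v" using L4_af v(1) .
      then have "af w" using w af_not af_rev by metis
      moreover have "length w = n" using w v(2) by auto
      ultimately show "w \<in> A n" using A_eq by auto
    qed
  qed
qed

end
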